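(* Assume Assumption 1, Assumption 2 and the null hypothesis $H_0:\ T_i(1)=T_i(0)$ for all $i$, and condition on $\boldsymbol{T}(1),\boldsymbol{T}(0)$. Then for each $1\le k\le K$, $$\mathbb{E}\{D_k(N_k-D_k)\mid\boldsymbol{T}(1),\boldsymbol{T}(0),N_k\}=N_k(N_k-1)h_k(1-h_k)\frac{n_k}{n_k-1},$$ $$\mathbb{E}\{N_{1k}(N_k-N_{1k})\mid\boldsymbol{T}(1),\boldsymbol{T}(0),N_k\}=N_k(N_k-1)\phi_k(1-\phi_k).$$
   Context: There are $n$ units. Unit $i$ has potential event times $T_i(1),T_i(0)\ge 0$, potential censoring times $C_i(1),C_i(0)\in[0,\infty]$, and treatment indicator $Z_i\in\{0,1\}$; bold letters denote $n$-vectors. Assumption 1: conditional on $\boldsymbol{T}(1),\boldsymbol{T}(0),\boldsymbol{C}(1),\boldsymbol{C}(0)$, the $Z_i$ are i.i.d. Bernoulli$(p_1)$, $p_1=1-p_0\in(0,1)$. Assumption 2: $(\boldsymbol{C}(1),\boldsymbol{C}(0))$ is independent of $(\boldsymbol{T}(1),\boldsymbol{T}(0))$ and the pairs $(C_i(1),C_i(0))$ are i.i.d. across $i$. $G_z(c)=\Pr(C_i(z)\ge c)$, $G(t)=p_1G_1(t)+p_0G_0(t)$. Realized: $W_i=\min\{T_i,C_i\}$, $\Delta_i=\mathbb{1}(T_i\le C_i)$ with $T_i=Z_iT_i(1)+(1-Z_i)T_i(0)$, $C_i=Z_iC_i(1)+(1-Z_i)C_i(0)$. Let $t_1<\dots<t_K$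 be the distinct values of $\{T_i(0)\}$, $d_k=\#\{i:T_i(0)=t_k\}$, $n_k=\#\{i:T_i(0)\ge t_k\}$, $h_k=d_k/n_k$, $\phi_k=p_1G_1(t_k)/G(t_k)$; $N_{1k}=\sum_iZ_i\mathbb{1}(W_i\ge t_k)$, $N_k=\sum_i\mathbb{1}(W_i\ge t_k)$, $D_k=\sum_i\Delta_i\mathbb{1}(W_i=t_k)$. Convention $0/0:=0$. *)

theory Defs
  imports "HOL-Probability.Probability"
begin

text \<open>Event times are real, censoring times are extended reals
(values in [0,\<infinity>]). Randomness lives in a probability space M; Z i, C1 i, C0 i are random
variables; the event times T1, T0 are fixed (we condition on them).\<close>

definition realT :: "(nat \<Rightarrow> 'a \<Rightarrow> bool) \<Rightarrow> (nat \<Rightarrow> real) \<Rightarrow> (nat \<Rightarrow> real) \<Rightarrow> nat \<Rightarrow> 'a \<Rightarrow> real" where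
  "realT Z T1 T0 i \<omega> = (if Z i \<omega> then T1 i else T0 i)"

definition realC :: "(nat \<Rightarrow> 'a \<Rightarrow> bool) \<Rightarrow> (nat \<Rightarrow> 'a \<Rightarrow> ereal) \<Rightarrow> (nat \<Rightarrow> 'a \<Rightarrow> ereal) \<Rightarrow> nat \<Rightarrow> 'a \<Rightarrow> ereal" where
  "realC Z C1 C0 i \<omega> = (if Z i \<omega> then C1 i \<omega> else C0 i \<omega>)"

definition realW where
  "realW Z T1 T0 C1 C0 i \<omega> = min (ereal (realT Z T1 T0 i \<omega>)) (realC Z C1 C0 i \<omega>)"

definition realDelta where
  "realDelta Z T1 T0 C1 C0 i \<omega> = (ereal (realT Z T1 T0 i \<omega>) \<le> realC Z C1 C0 i \<omega>)"

definition N1at :: "nat \<Rightarrow> (nat \<Rightarrow> 'a \<Rightarrow> bool) \<Rightarrow> (nat \<Rightarrow> real) \<Rightarrow> (nat \<Rightarrow> real) \<Rightarrow> (nat \<Rightarrow> 'a \<Rightarrow> ereal) \<Rightarrow> (nat \<Rightarrow> 'a \<Rightarrow> ereal) \<Rightarrow> real \<Rightarrow> 'a \<Rightarrow> nat" where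
  "N1at n Z T1 T0 C1 C0 t \<omega> = card {i. i < n \<and> Z i \<omega> \<and> realW Z T1 T0 C1 C0 i \<omega> \<ge> ereal t}"

definition Nat_at :: "nat \<Rightarrow> (nat \<Rightarrow> 'a \<Rightarrow> bool) \<Rightarrow> (nat \<Rightarrow> real) \<Rightarrow> (nat \<Rightarrow> real) \<Rightarrow> (nat \<Rightarrow> 'a \<Rightarrow> ereal) \<Rightarrow> (nat \<Rightarrow> 'a \<Rightarrow> ereal) \<Rightarrow> real \<Rightarrow> 'a \<Rightarrow> nat" where
  "Nat_at n Z T1 T0 C1 C0 t \<omega> = card {i. i < n \<and> realW Z T1 T0 C1 C0 i \<omega> \<ge> ereal t}"

definition Dat :: "nat \<Rightarrow> (nat \<Rightarrow> 'a \<Rightarrow> bool) \<Rightarrow> (nat \<Rightarrow> real) \<Rightarrow> (nat \<Rightarrow> real) \<Rightarrow> (nat \<Rightarrow> 'a \<Rightarrow> ereal) \<Rightarrow> (nat \<Rightarrow> 'a \<Rightarrow> ereal) \<Rightarrow> real \<Rightarrow> 'a \<Rightarrow> nat" where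
  "Dat n Z T1 T0 C1 C0 t \<omega> = card {i. i < n \<and> realDelta Z T1 T0 C1 C0 i \<omega> \<and> realW Z T1 T0 C1 C0 i \<omega> = ereal t}"

definition d_at :: "nat \<Rightarrow> (nat \<Rightarrow> real) \<Rightarrow> real \<Rightarrow> nat" where
  "d_at n T0 t = card {i. i < n \<and> T0 i = t}"

definition n_at :: "nat \<Rightarrow> (nat \<Rightarrow> real) \<Rightarrow> real \<Rightarrow> nat" where
  "n_at n T0 t = card {i. i < n \<and> T0 i \<ge> t}"

definition h_at :: "nat \<Rightarrow> (nat \<Rightarrow> real) \<Rightarrow> real \<Rightarrow> real" where
  "h_at n T0 t = real (d_at n T0 t) / real (n_at n T0 t)"

text \<open>G_z(c) = P(C_i(z) \<ge> c) (the same for every i by Assumption 2; we use unit 0),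
  phi_k = p1 G_1(t_k) / G(t_k) with G = p1 G_1 + p0 G_0 and 0/0 = 0.\<close>
definition Gsurv :: "'a measure \<Rightarrow> (nat \<Rightarrow> 'a \<Rightarrow> ereal) \<Rightarrow> real \<Rightarrow> real" where
  "Gsurv M C c = measure M {\<omega> \<in> space M. C 0 \<omega> \<ge> ereal c}"

definition phi_at :: "'a measure \<Rightarrow> real \<Rightarrow> (nat \<Rightarrow> 'a \<Rightarrow> ereal) \<Rightarrow> (nat \<Rightarrow> 'a \<Rightarrow> ereal) \<Rightarrow> real \<Rightarrow> real" where
  "phi_at M p1 C1 C0 t = p1 * Gsurv M C1 t / (p1 * Gsurv M C1 t + (1 - p1) * Gsurv M C0 t)"

text \<open>Conditional expectation of X given the discrete variable Y takes the value m
  (meaningful when P(Y = m) > 0).\<close>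
definition disc_cond_exp :: "'a measure \<Rightarrow> ('a \<Rightarrow> real) \<Rightarrow> ('a \<Rightarrow> nat) \<Rightarrow> nat \<Rightarrow> real" where
  "disc_cond_exp M X Y m =
     (\<integral>\<omega>. X \<omega> * indicator {\<omega> \<in> space M. Y \<omega> = m} \<omega> \<partial>M) / measure M {\<omega> \<in> space M. Y \<omega> = m}"

definition unitvec :: "(nat \<Rightarrow> 'a \<Rightarrow> bool) \<Rightarrow> (nat \<Rightarrow> 'a \<Rightarrow> ereal) \<Rightarrow> (nat \<Rightarrow> 'a \<Rightarrow> ereal) \<Rightarrow> nat \<Rightarrow> 'a \<Rightarrow> bool \<times> ereal \<times> ereal" where
  "unitvec Z C1 C0 i \<omega> = (Z i \<omega>, C1 i \<omega>, C0 i \<omega>)"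

definition unitspace :: "(bool \<times> ereal \<times> ereal) measure" where
  "unitspace = count_space UNIV \<Otimes>\<^sub>M (borel \<Otimes>\<^sub>M borel)"

end

theory Submission
  imports Defs
begin

definition Aset :: "real \<Rightarrow> (bool \<times> ereal \<times> ereal) set" where
  "Aset t = {x. ereal t \<le> (if fst x then fst (snd x) else snd (snd x))}"

lemma Nat_at_eq:
  assumes "\<forall>i<n. T1 i = T0 i"
  shows "Nat_at n Z T1 T0 C1 C0 t \<omega> = card {k\<in>{i. i<n \<and> t \<le> T0 i}. unitvec Z C1 C0 k \<omega> \<in> Aset t}"
  unfolding Nat_at_def
  by (rule arg_cong[where f=card]) (use assms in \<open>auto simp: realW_def realT_def realC_def unitvec_def Aset_def\<close>)

lemma N1at_eq:
  assumes "\<forall>i<n. T1 i = T0 i"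
  shows "N1at n Z T1 T0 C1 C0 t \<omega> = card {k\<in>{i. i<n \<and> t \<le> T0 i}. unitvec Z C1 C0 k \<omega> \<in> Aset t \<inter> {x. fst x}}"
  unfolding N1at_def
  by (rule arg_cong[where f=card]) (use assms in \<open>auto simp: realW_def realT_def realC_def unitvec_def Aset_def\<close>)

lemma Dat_eq:
  assumes "\<forall>i<n. T1 i = T0 i"
  shows "Dat n Z T1 T0 C1 C0 t \<omega> = card {k\<in>{i. i<n \<and> T0 i = t}. unitvec Z C1 C0 k \<omega> \<in> Aset t}"
  unfolding Dat_def
proof (rule arg_cong[where f=card], intro Collect_cong iffI)
  fix i
  assume a: "i < n \<and> realDelta Z T1 T0 C1 C0 i \<omega> \<and> realW Z T1 T0 C1 C0 i \<omega> = ereal t"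
  have T: "realT Z T1 T0 i \<omega> = T0 i" using assms a by (simp add: realT_def)
  have "ereal (T0 i) \<le> realC Z C1 C0 i \<omega>" "min (ereal (T0 i)) (realC Z C1 C0 i \<omega>) = ereal t"
    using a by (auto simp: realDelta_def realW_def T)
  then show "i \<in> {i. i < n \<and> T0 i = t} \<and> unitvec Z C1 C0 i \<omega> \<in> Aset t"
    using a by (auto simp: min_def realC_def unitvec_def Aset_def split: if_splits)
next
  fix i
  assume a: "i \<in> {i. i < n \<and> T0 i = t} \<and> unitvec Z C1 C0 i \<omega> \<in> Aset t"
  then show "i < n \<and> realDelta Z T1 T0 C1 C0 i \<omega> \<and> realW Z T1 T0 C1 C0 i \<omega> = ereal t"
    using assms by (auto simp: realDelta_def realW_def realT_def realC_def unitvec_def Aset_def min_def)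
qed

lemma space_unitspace[simp]: "space unitspace = UNIV"
  by (simp add: unitspace_def space_pair_measure)

lemma sets_box1: "{True} \<times> ({c. ereal t \<le> c} \<times> UNIV) \<in> sets unitspace"
  unfolding unitspace_def by (intro pair_measureI) auto

lemma sets_box0: "{False} \<times> (UNIV \<times> {c. ereal t \<le> c}) \<in> sets unitspace"
  unfolding unitspace_def by (intro pair_measureI) auto

lemma Aset_eq: "Aset t = {True} \<times> ({c. ereal t \<le> c} \<times> UNIV) \<union> {False} \<times> (UNIV \<times> {c. ereal t \<le> c})"
  unfolding Aset_def by auto

lemma sets_Aset: "Aset t \<in> sets unitspace"
  unfolding Aset_eq using sets_box1 sets_box0 by auto

lemma sets_compl: "(B::(bool \<times> ereal \<times> ereal) set) \<in> sets unitspace \<Longrightarrow> - B \<in> sets unitspace"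
  using sets.compl_sets[of B unitspace] by (simp add: Compl_eq_Diff_UNIV)

lemma ZA_eq: "Aset t \<inter> {x. fst x} = {True} \<times> ({c. ereal t \<le> c} \<times> UNIV)"
  unfolding Aset_def by auto

lemma nZA_eq: "Aset t \<inter> {x. \<not> fst x} = {False} \<times> (UNIV \<times> {c. ereal t \<le> c})"
  unfolding Aset_def by auto

lemma measure_times_prob:
  assumes "prob_space A" "prob_space B" "X \<in> sets A" "Y \<in> sets B"
  shows "measure (A \<Otimes>\<^sub>M B) (X \<times> Y) = measure A X * measure B Y"
proof -
  interpret B: prob_space B by fact
  show ?thesis using assms B.emeasure_pair_measure_Times[of X A Y]
    by (simp add: measure_def enn2real_mult)
qed

locale A5 = prob_space M for M :: "'a measure" +
  fixes n :: nat and Z :: "nat \<Rightarrow> 'a \<Rightarrow> bool" and C1 C0 :: "nat \<Rightarrow> 'a \<Rightarrow> ereal"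
    and p1 :: real and t :: real
  assumes meas: "\<forall>i<n. unitvec Z C1 C0 i \<in> measurable M unitspace"
    and indep: "indep_vars (\<lambda>_. unitspace) (unitvec Z C1 C0) {..<n}"
    and prodd: "\<forall>i<n. distr M unitspace (unitvec Z C1 C0 i)
               = distr M (count_space UNIV) (Z i) \<Otimes>\<^sub>M distr M (borel \<Otimes>\<^sub>M borel) (\<lambda>\<omega>. (C1 i \<omega>, C0 i \<omega>))"
    and pZ: "\<forall>i<n. measure M {\<omega> \<in> space M. Z i \<omega>} = p1"
    and ident: "\<forall>i<n. \<forall>j<n. distr M (borel \<Otimes>\<^sub>M borel) (\<lambda>\<omega>. (C1 i \<omega>, C0 i \<omega>))
                     = distr M (borel \<Otimes>\<^sub>M borel) (\<lambda>\<omega>. (C1 j \<omega>, C0 j \<omega>))"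
    and npos: "0 < n"
begin

abbreviation "X \<equiv> unitvec Z C1 C0"
definition "G1 = Gsurv M C1 t"
definition "G0 = Gsurv M C0 t"
definition "q = p1 * G1 + (1 - p1) * G0"

lemma sets_X: "k < n \<Longrightarrow> B \<in> sets unitspace \<Longrightarrow> {\<omega>\<in>space M. X k \<omega> \<in> B} \<in> events"
  using measurable_sets[of "X k" M unitspace B] meas by (simp add: vimage_def Int_def conj_commute)

lemma sets_cell: "J \<subseteq> {..<n} \<Longrightarrow> finite J \<Longrightarrow> \<forall>k\<in>J. B k \<in> sets unitspace
   \<Longrightarrow> {\<omega>\<in>space M. \<forall>k\<in>J. X k \<omega> \<in> B k} \<in> events"
  by (rule sets.sets_Collect_finite_All) (auto intro: sets_X)

lemma PL:
  assumes "J \<subseteq> {..<n}" "finite J" "\<forall>k\<in>J. B k \<in> sets unitspace"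
  shows "prob {\<omega>\<in>space M. \<forall>k\<in>J. X k \<omega> \<in> B k} = (\<Prod>k\<in>J. prob {\<omega>\<in>space M. X k \<omega> \<in> B k})"
proof (cases "J = {}")
  case True
  then show ?thesis by (simp add: prob_space)
next
  case False
  have ind: "indep_sets (\<lambda>i. sigma_sets (space M) { X i -` A \<inter> space M | A. A \<in> sets unitspace}) {..<n}"
    using indep unfolding indep_vars_def by blast
  have "prob (\<Inter>j\<in>J. X j -` B j \<inter> space M) = (\<Prod>j\<in>J. prob (X j -` B j \<inter> space M))"
    by (rule indep_setsD[OF ind assms(1) False assms(2)]) (use assms(3) in auto)
  moreover have "(\<Inter>j\<in>J. X j -` B j \<inter> space M) = {\<omega>\<in>space M. \<forall>k\<in>J. X k \<omega> \<in> B k}"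
    using False by auto
  moreover have "\<And>j. X j -` B j \<inter> space M = {\<omega>\<in>space M. X j \<omega> \<in> B j}" by auto
  ultimately show ?thesis by simp
qed

lemma measZ: "k < n \<Longrightarrow> Z k \<in> measurable M (count_space UNIV)"
proof -
  assume k: "k < n"
  have "X k \<in> measurable M (count_space UNIV \<Otimes>\<^sub>M (borel \<Otimes>\<^sub>M borel))"
    using meas k unfolding unitspace_def by blast
  from measurable_compose[OF this measurable_fst] show ?thesis by (simp add: unitvec_def o_def)
qed

lemma measC: "k < n \<Longrightarrow> (\<lambda>\<omega>. (C1 k \<omega>, C0 k \<omega>)) \<in> measurable M (borel \<Otimes>\<^sub>M borel)"
proof -
  assume k: "k < n"
  have "X k \<in> measurable M (count_space UNIV \<Otimes>\<^sub>M (borel \<Otimes>\<^sub>M borel))"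
    using meas k unfolding unitspace_def by blast
  from measurable_compose[OF this measurable_snd] show ?thesis by (simp add: unitvec_def o_def)
qed

lemma box_prob:
  assumes k: "k < n" and S: "S \<in> sets (borel \<Otimes>\<^sub>M borel)"
  shows "prob {\<omega>\<in>space M. X k \<omega> \<in> {b} \<times> S} =
     prob {\<omega>\<in>space M. Z k \<omega> = b} * prob {\<omega>\<in>space M. (C1 0 \<omega>, C0 0 \<omega>) \<in> S}"
proof -
  have bS: "{b} \<times> S \<in> sets unitspace" unfolding unitspace_def using S by (intro pair_measureI) auto
  have "prob {\<omega>\<in>space M. X k \<omega> \<in> {b} \<times> S} = measure (distr M unitspace (X k)) ({b} \<times> S)"
    using measure_distr[of "X k" M unitspace "{b} \<times> S"] meas k bS by (simp add: vimage_def Int_def conj_commute)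
  also have "\<dots> = measure (distr M (count_space UNIV) (Z k)) {b} * measure (distr M (borel \<Otimes>\<^sub>M borel) (\<lambda>\<omega>. (C1 k \<omega>, C0 k \<omega>))) S"
    using prodd k S measZ[OF k] measC[OF k]
    by (simp add: measure_times_prob prob_space_distr)
  also have "measure (distr M (borel \<Otimes>\<^sub>M borel) (\<lambda>\<omega>. (C1 k \<omega>, C0 k \<omega>))) S
     = measure (distr M (borel \<Otimes>\<^sub>M borel) (\<lambda>\<omega>. (C1 0 \<omega>, C0 0 \<omega>))) S"
    using ident k npos by metis
  also have "\<dots> = prob {\<omega>\<in>space M. (C1 0 \<omega>, C0 0 \<omega>) \<in> S}"
    using measure_distr[OF measC[OF npos] S] by (simp add: vimage_def Int_def conj_commute)
  also have "measure (distr M (count_space UNIV) (Z k)) {b} = prob {\<omega>\<in>space M. Z k \<omega> = b}"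
    using measure_distr[OF measZ[OF k], of "{b}"] by (simp add: vimage_def Int_def conj_commute)
  finally show ?thesis .
qed

lemma pZb: "k < n \<Longrightarrow> prob {\<omega>\<in>space M. Z k \<omega>} = p1"
  using pZ by simp

lemma pZb0: "k < n \<Longrightarrow> prob {\<omega>\<in>space M. \<not> Z k \<omega>} = 1 - p1"
proof -
  assume k: "k < n"
  have ev: "{\<omega>\<in>space M. Z k \<omega>} \<in> events"
    using measurable_sets[OF measZ[OF k], of "{True}"] by (simp add: vimage_def Int_def conj_commute)
  have "{\<omega>\<in>space M. \<not> Z k \<omega>} = space M - {\<omega>\<in>space M. Z k \<omega>}" by auto
  then show ?thesis using prob_compl[OF ev] pZ k by simp
qed

lemma sets_half1: "{c::ereal. ereal t \<le> c} \<times> UNIV \<in> sets (borel \<Otimes>\<^sub>M borel)"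
  by (intro pair_measureI) auto
lemma sets_half0: "UNIV \<times> {c::ereal. ereal t \<le> c} \<in> sets (borel \<Otimes>\<^sub>M borel)"
  by (intro pair_measureI) auto

lemma pZA: "k < n \<Longrightarrow> prob {\<omega>\<in>space M. X k \<omega> \<in> Aset t \<inter> {x. fst x}} = p1 * G1"
  unfolding ZA_eq
  by (subst box_prob) (auto simp: sets_half1 pZb G1_def Gsurv_def)

lemma pnZA: "k < n \<Longrightarrow> prob {\<omega>\<in>space M. X k \<omega> \<in> Aset t \<inter> {x. \<not> fst x}} = (1 - p1) * G0"
  unfolding nZA_eq
  by (subst box_prob) (auto simp: sets_half0 pZb0 G0_def Gsurv_def)

lemma pA: "k < n \<Longrightarrow> prob {\<omega>\<in>space M. X k \<omega> \<in> Aset t} = q"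
proof -
  assume k: "k < n"
  have "{\<omega>\<in>space M. X k \<omega> \<in> Aset t} = {\<omega>\<in>space M. X k \<omega> \<in> Aset t \<inter> {x. fst x}} \<union> {\<omega>\<in>space M. X k \<omega> \<in> Aset t \<inter> {x. \<not> fst x}}"
    by auto
  moreover have "prob (\<dots>) = p1 * G1 + (1 - p1) * G0"
    apply (subst finite_measure_Union)
    using sets_X[OF k] pZA[OF k] pnZA[OF k] sets_Aset sets_box1 sets_box0 unfolding ZA_eq nZA_eq
    by auto
  ultimately show ?thesis by (simp add: q_def)
qed

lemma pnA: "k < n \<Longrightarrow> prob {\<omega>\<in>space M. X k \<omega> \<in> - Aset t} = 1 - q"
proof -
  assume k: "k < n"
  have "{\<omega>\<in>space M. X k \<omega> \<in> - Aset t} = space M - {\<omega>\<in>space M. X k \<omega> \<in> Aset t}" by auto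
  then show ?thesis using prob_compl[OF sets_X[OF k sets_Aset]] pA[OF k] by simp
qed

lemma pnA': "k < n \<Longrightarrow> prob {\<omega>\<in>space M. X k \<omega> \<notin> Aset t} = 1 - q"
  using pnA by simp

lemma GL:
  fixes r :: nat
  assumes F: "F \<subseteq> {..<n}" and S: "S \<subseteq> {..<n}" and FS: "F \<inter> S = {}"
    and B: "\<forall>k\<in>F. B k \<in> sets unitspace"
  defines "E \<equiv> {\<omega>\<in>space M. (\<forall>k\<in>F. X k \<omega> \<in> B k) \<and> card {k\<in>S. X k \<omega> \<in> Aset t} = r}"
  shows "E \<in> events \<and> prob E = (\<Prod>k\<in>F. prob {\<omega>\<in>space M. X k \<omega> \<in> B k}) * real (card S choose r) * q ^ r * (1 - q) ^ (card S - r)"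
proof -
  have fF: "finite F" and fS: "finite S" using F S finite_subset by auto
  define TT where "TT = {T. T \<subseteq> S \<and> card T = r}"
  define B' where "B' T k = (if k \<in> F then B k else if k \<in> T then Aset t else - Aset t)" for T k
  define cell where "cell T = {\<omega>\<in>space M. \<forall>k\<in>F \<union> S. X k \<omega> \<in> B' T k}" for T
  have fTT: "finite TT" unfolding TT_def using fS by (auto intro: finite_subset[of _ "Pow S"])
  have B'sets: "\<forall>k\<in>F \<union> S. B' T k \<in> sets unitspace" for T
    using B by (auto simp: B'_def sets_Aset sets_compl)
  have cell_ev: "cell T \<in> events" for T
    unfolding cell_def using sets_cell[of "F \<union> S" "B' T"] F S fF fS B'sets by auto
  have E_eq: "E = (\<Union>T\<in>TT. cell T)"
  proof (intro equalityI subsetI)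
    fix \<omega> assume w: "\<omega> \<in> E"
    let ?T = "{k\<in>S. X k \<omega> \<in> Aset t}"
    have "?T \<in> TT" using w unfolding E_def TT_def by auto
    moreover have "\<omega> \<in> cell ?T" using w FS unfolding E_def cell_def B'_def by auto
    ultimately show "\<omega> \<in> (\<Union>T\<in>TT. cell T)" by blast
  next
    fix \<omega> assume "\<omega> \<in> (\<Union>T\<in>TT. cell T)"
    then obtain T where T: "T \<in> TT" "\<omega> \<in> cell T" by blast
    have "{k\<in>S. X k \<omega> \<in> Aset t} = T"
      using T FS unfolding TT_def cell_def B'_def by (auto split: if_splits)
    then show "\<omega> \<in> E" using T unfolding E_def TT_def cell_def B'_def by (auto split: if_splits)
  qed
  have disj: "disjoint_family_on cell TT"
  unfolding disjoint_family_on_def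
  proof (intro ballI impI)
    fix T T' assume T: "T \<in> TT" "T' \<in> TT" "T \<noteq> T'"
    then obtain k where k: "k \<in> S" "(k \<in> T) \<noteq> (k \<in> T')" unfolding TT_def by blast
    then have "k \<notin> F" using FS by auto
    then show "cell T \<inter> cell T' = {}" using k unfolding cell_def B'_def by auto
  qed
  have pcell: "prob (cell T) = (\<Prod>k\<in>F. prob {\<omega>\<in>space M. X k \<omega> \<in> B k}) * q ^ r * (1 - q) ^ (card S - r)"
    if T: "T \<in> TT" for T
  proof -
    have TS: "T \<subseteq> S" "card T = r" using T unfolding TT_def by auto
    have "prob (cell T) = (\<Prod>k\<in>F \<union> S. prob {\<omega>\<in>space M. X k \<omega> \<in> B' T k})"
      unfolding cell_def using PL[of "F \<union> S" "B' T"] F S fF fS B'sets by auto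
    also have "\<dots> = (\<Prod>k\<in>F. prob {\<omega>\<in>space M. X k \<omega> \<in> B' T k}) * (\<Prod>k\<in>S. prob {\<omega>\<in>space M. X k \<omega> \<in> B' T k})"
      by (rule prod.union_disjoint) (use fF fS FS in auto)
    also have "(\<Prod>k\<in>F. prob {\<omega>\<in>space M. X k \<omega> \<in> B' T k}) = (\<Prod>k\<in>F. prob {\<omega>\<in>space M. X k \<omega> \<in> B k})"
      by (rule prod.cong) (auto simp: B'_def)
    also have "(\<Prod>k\<in>S. prob {\<omega>\<in>space M. X k \<omega> \<in> B' T k}) = (\<Prod>k\<in>S. if k \<in> T then q else 1 - q)"
      proof (rule prod.cong)
      fix k assume k: "k \<in> S"
      then have "k \<notin> F" "k < n" using FS S by auto
      then show "prob {\<omega>\<in>space M. X k \<omega> \<in> B' T k} = (if k \<in> T then q else 1 - q)"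
        by (simp add: B'_def pA pnA')
    qed simp
    also have "\<dots> = q ^ card (S \<inter> {k. k \<in> T}) * (1 - q) ^ card (S \<inter> - {k. k \<in> T})"
      by (simp add: prod.If_cases fS)
    also have "S \<inter> {k. k \<in> T} = T" using TS by auto
    also have "S \<inter> - {k. k \<in> T} = S - T" by auto
    also have "card (S - T) = card S - r" using TS fS by (simp add: card_Diff_subset finite_subset)
    finally show ?thesis using TS by simp
  qed
  have "prob E = (\<Sum>T\<in>TT. prob (cell T))"
    unfolding E_eq by (rule finite_measure_finite_Union) (use fTT cell_ev disj in auto)
  also have "\<dots> = (\<Sum>T\<in>TT. (\<Prod>k\<in>F. prob {\<omega>\<in>space M. X k \<omega> \<in> B k}) * q ^ r * (1 - q) ^ (card S - r))"
    by (rule sum.cong) (auto simp: pcell)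
  also have "\<dots> = real (card TT) * ((\<Prod>k\<in>F. prob {\<omega>\<in>space M. X k \<omega> \<in> B k}) * q ^ r * (1 - q) ^ (card S - r))"
    by simp
  also have "card TT = card S choose r" unfolding TT_def by (rule n_subsets[OF fS])
  finally have "prob E = (\<Prod>k\<in>F. prob {\<omega>\<in>space M. X k \<omega> \<in> B k}) * real (card S choose r) * q ^ r * (1 - q) ^ (card S - r)"
    by (simp add: algebra_simps)
  moreover have "E \<in> events" unfolding E_eq using fTT cell_ev by auto
  ultimately show ?thesis by simp
qed

lemma pair:
  fixes r :: nat
  assumes R: "R \<subseteq> {..<n}" "i \<in> R" "j \<in> R" "i \<noteq> j"
    and Bi: "Bi \<in> sets unitspace" "Bi \<subseteq> Aset t" and Bj: "Bj \<in> sets unitspace" "Bj \<subseteq> Aset t"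
  defines "E \<equiv> {\<omega>\<in>space M. X i \<omega> \<in> Bi \<and> X j \<omega> \<in> Bj \<and> card {k\<in>R. X k \<omega> \<in> Aset t} = r + 2}"
  shows "E \<in> events \<and> prob E = prob {\<omega>\<in>space M. X i \<omega> \<in> Bi} * prob {\<omega>\<in>space M. X j \<omega> \<in> Bj}
      * real (card R - 2 choose r) * q ^ r * (1 - q) ^ (card R - 2 - r)"
proof -
  define B where "B k = (if k = i then Bi else Bj)" for k
  have fR: "finite R" using R finite_subset by auto
  have G: "{\<omega>\<in>space M. (\<forall>k\<in>{i,j}. X k \<omega> \<in> B k) \<and> card {k\<in>R - {i,j}. X k \<omega> \<in> Aset t} = r} \<in> events \<and>
    prob {\<omega>\<in>space M. (\<forall>k\<in>{i,j}. X k \<omega> \<in> B k) \<and> card {k\<in>R - {i,j}. X k \<omega> \<in> Aset t} = r}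
     = (\<Prod>k\<in>{i,j}. prob {\<omega>\<in>space M. X k \<omega> \<in> B k}) * real (card (R - {i,j}) choose r) * q ^ r * (1 - q) ^ (card (R - {i,j}) - r)"
    by (rule GL) (use R Bi Bj in \<open>auto simp: B_def\<close>)
  have cardeq: "card {k\<in>R. X k \<omega> \<in> Aset t} = card {k\<in>R - {i,j}. X k \<omega> \<in> Aset t} + 2"
    if "X i \<omega> \<in> Aset t" "X j \<omega> \<in> Aset t" for \<omega>
  proof -
    have "{k\<in>R. X k \<omega> \<in> Aset t} = insert i (insert j {k\<in>R - {i,j}. X k \<omega> \<in> Aset t})"
      using that R by auto
    then show ?thesis using fR R by simp
  qed
  have Eeq: "E = {\<omega>\<in>space M. (\<forall>k\<in>{i,j}. X k \<omega> \<in> B k) \<and> card {k\<in>R - {i,j}. X k \<omega> \<in> Aset t} = r}"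
    unfolding E_def
  proof (intro Collect_cong)
    fix \<omega>
    have b: "(\<forall>k\<in>{i,j}. X k \<omega> \<in> B k) \<longleftrightarrow> X i \<omega> \<in> Bi \<and> X j \<omega> \<in> Bj" using R by (auto simp: B_def)
    show "(\<omega> \<in> space M \<and> X i \<omega> \<in> Bi \<and> X j \<omega> \<in> Bj \<and> card {k\<in>R. X k \<omega> \<in> Aset t} = r + 2) \<longleftrightarrow>
      (\<omega> \<in> space M \<and> (\<forall>k\<in>{i,j}. X k \<omega> \<in> B k) \<and> card {k\<in>R - {i,j}. X k \<omega> \<in> Aset t} = r)"
    proof (cases "X i \<omega> \<in> Bi \<and> X j \<omega> \<in> Bj")
      case True
      then have "X i \<omega> \<in> Aset t" "X j \<omega> \<in> Aset t" using Bi Bj by auto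
      from cardeq[OF this] show ?thesis using b True by simp
    next
      case False
      then show ?thesis using b by auto
    qed
  qed
  have "card (R - {i,j}) = card R - 2" using R fR by (simp add: card_Diff_subset)
  moreover have "(\<Prod>k\<in>{i,j}. prob {\<omega>\<in>space M. X k \<omega> \<in> B k}) = prob {\<omega>\<in>space M. X i \<omega> \<in> Bi} * prob {\<omega>\<in>space M. X j \<omega> \<in> Bj}"
    using R by (simp add: B_def)
  ultimately show ?thesis using G Eeq by simp
qed

lemma int_sum_ind:
  fixes E :: "nat \<Rightarrow> nat \<Rightarrow> 'a set"
  assumes "finite I" "\<And>i. i \<in> I \<Longrightarrow> finite (J i)" "\<And>i j. i \<in> I \<Longrightarrow> j \<in> J i \<Longrightarrow> E i j \<in> events"
  shows "(\<integral>\<omega>. (\<Sum>i\<in>I. \<Sum>j\<in>J i. indicator (E i j) \<omega>) \<partial>M) = (\<Sum>i\<in>I. \<Sum>j\<in>J i. prob (E i j))"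
proof -
  have int: "integrable M (indicator (E i j) :: 'a \<Rightarrow> real)" if "i \<in> I" "j \<in> J i" for i j
    using assms(3)[OF that] by (intro integrable_real_indicator) (auto simp: less_top[symmetric])
  have "(\<integral>\<omega>. (\<Sum>i\<in>I. \<Sum>j\<in>J i. indicator (E i j) \<omega>) \<partial>M) = (\<Sum>i\<in>I. \<integral>\<omega>. (\<Sum>j\<in>J i. indicator (E i j) \<omega> :: real) \<partial>M)"
  proof (rule Bochner_Integration.integral_sum)
    fix i assume "i \<in> I"
    show "integrable M (\<lambda>x. \<Sum>j\<in>J i. indicator (E i j) x :: real)"
      by (rule Bochner_Integration.integrable_sum, rule int[OF \<open>i \<in> I\<close>])
  qed
  also have "\<dots> = (\<Sum>i\<in>I. \<Sum>j\<in>J i. \<integral>\<omega>. indicator (E i j) \<omega> \<partial>M)"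
    by (rule sum.cong[OF refl], rule Bochner_Integration.integral_sum) (use int in auto)
  also have "\<dots> = (\<Sum>i\<in>I. \<Sum>j\<in>J i. prob (E i j))"
    using assms(3) sets.sets_into_space by (auto intro!: sum.cong simp: Int_absorb2)
  finally show ?thesis .
qed

end

lemma card_real_sum: "finite A \<Longrightarrow> real (card {k\<in>A. P k}) = (\<Sum>i\<in>A. if P i then 1 else 0)"
  by (simp add: sum.inter_filter[symmetric])

lemma card_mult_sum:
  "finite A \<Longrightarrow> finite B \<Longrightarrow> real (card {k\<in>A. P k}) * real (card {k\<in>B. Q k})
     = (\<Sum>i\<in>A. \<Sum>j\<in>B. if P i \<and> Q j then 1 else 0)"
  unfolding card_real_sum sum_product by (auto intro!: sum.cong)

lemma choose_two: "(k + 2) * (k + 1) * (N choose (k + 2)) = N * (N - 1) * ((N - 2) choose k)"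
proof (cases "N < 2")
  case True
  then have "N choose (k + 2) = 0" by simp
  with True show ?thesis by (cases N) auto
next
  case False
  then obtain N' where N: "N = Suc (Suc N')" by (metis add_2_eq_Suc le_Suc_ex not_less)
  have a: "Suc (Suc N') * (Suc N' choose Suc k) = (Suc (Suc N') choose Suc (Suc k)) * Suc (Suc k)"
    by (rule Suc_times_binomial_eq)
  have b: "Suc N' * (N' choose k) = (Suc N' choose Suc k) * Suc k"
    by (rule Suc_times_binomial_eq)
  have e: "N - 1 = Suc N'" "N - 2 = N'" by (simp_all add: N)
  have "N * (N - 1) * ((N - 2) choose k) = Suc (Suc N') * (Suc N' * (N' choose k))" using N e by (metis mult.assoc)
  also have "\<dots> = Suc (Suc N') * (Suc N' choose Suc k) * Suc k" by (simp only: b mult.assoc)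
  also have "\<dots> = (Suc (Suc N') choose Suc (Suc k)) * Suc (Suc k) * Suc k" by (simp only: a)
  finally have c: "N * (N - 1) * ((N - 2) choose k) = (Suc (Suc N') choose Suc (Suc k)) * Suc (Suc k) * Suc k" .
  have k2: "k + 2 = Suc (Suc k)" "k + 1 = Suc k" by simp_all
  have "(k + 2) * (k + 1) * (N choose (k + 2)) = (Suc (Suc N') choose Suc (Suc k)) * Suc (Suc k) * Suc k"
    unfolding k2 N by (metis mult.commute mult.left_commute)
  with c show ?thesis by simp
qed

lemma alg1:
  fixes D KK Cm Cr q w a b :: real
  assumes "a * b * Cm = KK * (KK - 1) * Cr" "KK \<ge> 2" "Cm \<noteq> 0" "q ^ (r + 2) * w \<noteq> 0"
  shows "D * (KK - D) * (q * q * (Cr * q ^ r * w)) / (Cm * q ^ (r + 2) * w) = a * b * (D / KK) * (1 - D / KK) * KK / (KK - 1)"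
proof -
  have K0: "KK \<noteq> 0" "KK - 1 \<noteq> 0" using assms(2) by auto
  have e: "q * q * (Cr * q ^ r * w) = Cr * (q ^ (r + 2) * w)" by (simp add: power_add power2_eq_square)
  have Cr: "Cr = a * b * Cm / (KK * (KK - 1))" using assms(1) K0 by (simp add: eq_divide_eq mult.commute)
  have "D * (KK - D) * (q * q * (Cr * q ^ r * w)) / (Cm * q ^ (r + 2) * w) = D * (KK - D) * Cr / Cm"
    unfolding e using assms(4) by (simp add: mult.assoc)
  also have "\<dots> = a * b * (D * (KK - D) / (KK * (KK - 1)))"
    unfolding Cr using assms(3) by simp
  also have "D * (KK - D) / (KK * (KK - 1)) = (D / KK) * (1 - D / KK) * KK / (KK - 1)"
    using K0 by (simp add: field_simps)
  finally show ?thesis by simp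
qed

lemma alg2:
  fixes KK Cm Cr q w a b x y :: real
  assumes "a * b * Cm = KK * (KK - 1) * Cr" "Cm \<noteq> 0" "q ^ (r + 2) * w \<noteq> 0" "q = x + y"
  shows "KK * (KK - 1) * (x * y * (Cr * q ^ r * w)) / (Cm * q ^ (r + 2) * w) = a * b * (x / q) * (1 - x / q)"
proof -
  have q0: "q \<noteq> 0" using assms(3) by auto
  have w0: "w \<noteq> 0" using assms(3) by auto
  have qr: "q ^ r \<noteq> 0" using q0 by simp
  have e: "q ^ (r + 2) = q ^ r * (q * q)" by (simp add: power_add power2_eq_square)
  have "KK * (KK - 1) * (x * y * (Cr * q ^ r * w)) / (Cm * q ^ (r + 2) * w) = (KK * (KK - 1) * Cr) * x * y / (Cm * (q * q))"
    unfolding e using q0 w0 qr assms(2) by (simp add: field_simps)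
  also have "\<dots> = a * b * Cm * x * y / (Cm * (q * q))" using assms(1) by simp
  also have "\<dots> = a * b * x * y / (q * q)" using assms(2) by simp
  also have "\<dots> = a * b * (x / q) * (1 - x / q)" using q0 assms(4) by (simp add: field_simps)
  finally show ?thesis .
qed
theorem lemmaA5:
  fixes M :: "'a measure" and n :: nat and p1 :: real
    and T1 T0 :: "nat \<Rightarrow> real"
    and Z :: "nat \<Rightarrow> 'a \<Rightarrow> bool" and C1 C0 :: "nat \<Rightarrow> 'a \<Rightarrow> ereal"
    and t :: real and m :: nat
  assumes "prob_space M"
    and "0 < p1" and "p1 < 1"
    and "\<forall>i<n. T1 i \<ge> 0 \<and> T0 i \<ge> 0"
    and "\<forall>i<n. \<forall>\<omega>\<in>space M. C1 i \<omega> \<ge> 0 \<and> C0 i \<omega> \<ge> 0"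
    \<comment> \<open>measurability, and mutual independence of Z_1,...,Z_n,(C_1(1),C_1(0)),...,(C_n(1),C_n(0))\<close>
    and "\<forall>i<n. unitvec Z C1 C0 i \<in> measurable M unitspace"
    and "prob_space.indep_vars M (\<lambda>_. unitspace) (unitvec Z C1 C0) {..<n}"
    and "\<forall>i<n. distr M unitspace (unitvec Z C1 C0 i)
               = distr M (count_space UNIV) (Z i) \<Otimes>\<^sub>M distr M (borel \<Otimes>\<^sub>M borel) (\<lambda>\<omega>. (C1 i \<omega>, C0 i \<omega>))"
    \<comment> \<open>Assumption 1: Z_i ~ Bernoulli(p1)\<close>
    and "\<forall>i<n. measure M {\<omega> \<in> space M. Z i \<omega>} = p1"
    \<comment> \<open>Assumption 2: the censoring pairs are identically distributed\<close>
    and "\<forall>i<n. \<forall>j<n. distr M (borel \<Otimes>\<^sub>M borel) (\<lambda>\<omega>. (C1 i \<omega>, C0 i \<omega>))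
                     = distr M (borel \<Otimes>\<^sub>M borel) (\<lambda>\<omega>. (C1 j \<omega>, C0 j \<omega>))"
    \<comment> \<open>null hypothesis H0\<close>
    and "\<forall>i<n. T1 i = T0 i"
    \<comment> \<open>t = t_k is one of the distinct values of T(0); we condition on N_k = m\<close>
    and "t \<in> T0 ` {..<n}"
    and "measure M {\<omega> \<in> space M. Nat_at n Z T1 T0 C1 C0 t \<omega> = m} > 0"
  shows "(disc_cond_exp M
           (\<lambda>\<omega>. real (Dat n Z T1 T0 C1 C0 t \<omega>) *
                 (real (Nat_at n Z T1 T0 C1 C0 t \<omega>) - real (Dat n Z T1 T0 C1 C0 t \<omega>)))
           (Nat_at n Z T1 T0 C1 C0 t) m
         = real m * (real m - 1) * h_at n T0 t * (1 - h_at n T0 t)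
             * real (n_at n T0 t) / (real (n_at n T0 t) - 1))
       \<and> (disc_cond_exp M
           (\<lambda>\<omega>. real (N1at n Z T1 T0 C1 C0 t \<omega>) *
                 (real (Nat_at n Z T1 T0 C1 C0 t \<omega>) - real (N1at n Z T1 T0 C1 C0 t \<omega>)))
           (Nat_at n Z T1 T0 C1 C0 t) m
         = real m * (real m - 1) * phi_at M p1 C1 C0 t * (1 - phi_at M p1 C1 C0 t))"
proof -
  have n0: "0 < n" using assms(12) by auto
  interpret A: A5 M n Z C1 C0 p1 t
    using assms(1,6,7,8,9,10) n0 unfolding A5_def A5_axioms_def by blast
  define R where "R = {i. i < n \<and> t \<le> T0 i}"
  define Ds where "Ds = {i. i < n \<and> T0 i = t}"
  define NN where "NN \<omega> = card {k\<in>R. unitvec Z C1 C0 k \<omega> \<in> Aset t}" for \<omega>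
  define DD where "DD \<omega> = card {k\<in>Ds. unitvec Z C1 C0 k \<omega> \<in> Aset t}" for \<omega>
  define N1 where "N1 \<omega> = card {k\<in>R. unitvec Z C1 C0 k \<omega> \<in> Aset t \<inter> {x. fst x}}" for \<omega>
  have Neq: "Nat_at n Z T1 T0 C1 C0 t = NN"
    using Nat_at_eq[OF assms(11)] unfolding NN_def R_def by (intro ext) simp
  have Deq: "Dat n Z T1 T0 C1 C0 t = DD"
    using Dat_eq[OF assms(11)] unfolding DD_def Ds_def by (intro ext) simp
  have N1eq: "N1at n Z T1 T0 C1 C0 t = N1"
    using N1at_eq[OF assms(11)] unfolding N1_def R_def by (intro ext) simp
  have RR: "R \<subseteq> {..<n}" "finite R" "Ds \<subseteq> R" "finite Ds"
    unfolding R_def Ds_def by auto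
  have nk: "n_at n T0 t = card R" by (simp add: n_at_def R_def)
  have dk: "d_at n T0 t = card Ds" by (simp add: d_at_def Ds_def)
  have phi: "phi_at M p1 C1 C0 t = p1 * A.G1 / A.q"
    by (simp add: phi_at_def A.G1_def A.G0_def A.q_def)
  define Em where "Em = {\<omega>\<in>space M. NN \<omega> = m}"
  have GLm: "Em \<in> sets M \<and> measure M Em = real (card R choose m) * A.q ^ m * (1 - A.q) ^ (card R - m)"
    using A.GL[of "{}" R "\<lambda>_. {}" m] RR unfolding Em_def NN_def by simp
  have Pm_pos: "measure M Em > 0" using assms(13) Neq by (simp add: Em_def)
  have m_le: "m \<le> card R"
  proof (rule ccontr)
    assume "\<not> m \<le> card R"
    then have c0: "real (card R choose m) = 0" by simp
    have "measure M Em = real (card R choose m) * A.q ^ m * (1 - A.q) ^ (card R - m)" using GLm by blast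
    with c0 have "measure M Em = 0" by simp
    with Pm_pos show False by simp
  qed
  have disc: "\<And>f. disc_cond_exp M f NN m = (\<integral>\<omega>. f \<omega> * indicator Em \<omega> \<partial>M) / measure M Em"
    by (simp add: disc_cond_exp_def Em_def)
  have DleN: "DD \<omega> \<le> NN \<omega>" for \<omega>
    unfolding DD_def NN_def by (rule card_mono) (use RR in auto)
  have N1leN: "N1 \<omega> \<le> NN \<omega>" for \<omega>
    unfolding N1_def NN_def by (rule card_mono) (use RR in auto)
  show ?thesis
  proof (cases "m < 2")
    case True
    have z1: "(\<integral>\<omega>. real (DD \<omega>) * (real (NN \<omega>) - real (DD \<omega>)) * indicator Em \<omega> \<partial>M) = (\<integral>\<omega>. 0 \<partial>M)"
    proof (rule Bochner_Integration.integral_cong[OF refl])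
      fix \<omega> assume "\<omega> \<in> space M"
      show "real (DD \<omega>) * (real (NN \<omega>) - real (DD \<omega>)) * indicator Em \<omega> = 0"
      proof (cases "\<omega> \<in> Em")
        case True
        then have "NN \<omega> = m" by (simp add: Em_def)
        then have "DD \<omega> = 0 \<or> DD \<omega> = NN \<omega>" using DleN[of \<omega>] \<open>m < 2\<close> by linarith
        then show ?thesis by auto
      qed simp
    qed
    have z2: "(\<integral>\<omega>. real (N1 \<omega>) * (real (NN \<omega>) - real (N1 \<omega>)) * indicator Em \<omega> \<partial>M) = (\<integral>\<omega>. 0 \<partial>M)"
    proof (rule Bochner_Integration.integral_cong[OF refl])
      fix \<omega> assume "\<omega> \<in> space M"
      show "real (N1 \<omega>) * (real (NN \<omega>) - real (N1 \<omega>)) * indicator Em \<omega> = 0"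
      proof (cases "\<omega> \<in> Em")
        case True
        then have "NN \<omega> = m" by (simp add: Em_def)
        then have "N1 \<omega> = 0 \<or> N1 \<omega> = NN \<omega>" using N1leN[of \<omega>] \<open>m < 2\<close> by linarith
        then show ?thesis by auto
      qed simp
    qed
    have mm: "real m * (real m - 1) = 0" using True by (cases m) auto
    show ?thesis unfolding Deq N1eq Neq disc z1 z2 using mm by simp
  next
    case False
    define r where "r = m - 2"
    have m: "m = r + 2" using False by (simp add: r_def)
    define Q where "Q = real (card R - 2 choose r) * A.q ^ r * (1 - A.q) ^ (card R - 2 - r)"
    define q where "q = A.q"
    define K where "K = card R"
    define e where "e = K - m"
    have Ke: "K - 2 - r = e" by (simp add: e_def m)
    have Pm: "measure M Em = real (K choose m) * q ^ (r + 2) * (1 - q) ^ e"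
      using GLm by (simp add: q_def K_def e_def m)
    have Q: "Q = real (K - 2 choose r) * q ^ r * (1 - q) ^ e"
      unfolding Q_def q_def[symmetric] K_def[symmetric] Ke by (rule refl)
    have ch: "real (r + 2) * real (r + 1) * real (K choose m) = real K * (real K - 1) * real (K - 2 choose r)"
    proof -
      have "real ((r + 2) * (r + 1) * (K choose (r + 2))) = real (K * (K - 1) * ((K - 2) choose r))"
        using choose_two[of r K] by (rule arg_cong)
      moreover have "real (K - 1) = real K - 1" using m_le m by (simp add: K_def)
      ultimately show ?thesis by (simp add: m algebra_simps)
    qed
    have K2: "real K \<ge> 2" using m_le m by (simp add: K_def)
    have prodnz: "real (K choose m) * (q ^ (r + 2) * (1 - q) ^ e) \<noteq> 0"
      using Pm_pos unfolding Pm by (metis less_irrefl mult.assoc)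
    have Cm0: "real (K choose m) \<noteq> 0" and qw0: "q ^ (r + 2) * (1 - q) ^ e \<noteq> 0"
      using prodnz by (metis mult_zero_left, metis mult_zero_right)
    have cardE: "\<And>i j. i \<in> R \<Longrightarrow> j \<in> R \<Longrightarrow> i \<noteq> j \<Longrightarrow> Bi \<in> sets unitspace \<Longrightarrow> Bi \<subseteq> Aset t
        \<Longrightarrow> Bj \<in> sets unitspace \<Longrightarrow> Bj \<subseteq> Aset t \<Longrightarrow>
        {\<omega>\<in>space M. unitvec Z C1 C0 i \<omega> \<in> Bi \<and> unitvec Z C1 C0 j \<omega> \<in> Bj \<and> NN \<omega> = r + 2} \<in> sets M \<and>
        measure M {\<omega>\<in>space M. unitvec Z C1 C0 i \<omega> \<in> Bi \<and> unitvec Z C1 C0 j \<omega> \<in> Bj \<and> NN \<omega> = r + 2}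
        = measure M {\<omega>\<in>space M. unitvec Z C1 C0 i \<omega> \<in> Bi} * measure M {\<omega>\<in>space M. unitvec Z C1 C0 j \<omega> \<in> Bj} * Q"
      for Bi Bj
      using A.pair[of R _ _ Bi Bj r] RR unfolding NN_def Q_def by auto
    have inR: "\<And>i. i \<in> R \<Longrightarrow> i < n" using RR by auto
    define E where "E i j = {\<omega>\<in>space M. unitvec Z C1 C0 i \<omega> \<in> Aset t \<and> unitvec Z C1 C0 j \<omega> \<in> Aset t \<and> NN \<omega> = r + 2}" for i j
    have Eprop: "E i j \<in> sets M \<and> measure M (E i j) = q * q * Q" if "i \<in> Ds" "j \<in> R - Ds" for i j
    proof -
      have "i \<in> R" "j \<in> R" "i \<noteq> j" using that RR by auto
      with cardE[OF this sets_Aset subset_refl sets_Aset subset_refl] A.pA[OF inR[OF \<open>i \<in> R\<close>]] A.pA[OF inR[OF \<open>j \<in> R\<close>]]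
      show ?thesis by (simp add: E_def q_def)
    qed
    have pw1: "real (DD \<omega>) * (real (NN \<omega>) - real (DD \<omega>)) * indicator Em \<omega> = (\<Sum>i\<in>Ds. \<Sum>j\<in>R - Ds. indicator (E i j) \<omega>)"
      if w: "\<omega> \<in> space M" for \<omega>
    proof -
      have un: "{k\<in>R. unitvec Z C1 C0 k \<omega> \<in> Aset t} = {k\<in>Ds. unitvec Z C1 C0 k \<omega> \<in> Aset t} \<union> {k\<in>R - Ds. unitvec Z C1 C0 k \<omega> \<in> Aset t}"
        using RR by auto
      have "NN \<omega> = DD \<omega> + card {k\<in>R - Ds. unitvec Z C1 C0 k \<omega> \<in> Aset t}"
        unfolding NN_def DD_def un by (rule card_Un_disjoint) (use RR in auto)
      then have "real (NN \<omega>) - real (DD \<omega>) = real (card {k\<in>R - Ds. unitvec Z C1 C0 k \<omega> \<in> Aset t})" by simp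
      then have s1: "real (DD \<omega>) * (real (NN \<omega>) - real (DD \<omega>)) * indicator Em \<omega>
        = real (DD \<omega>) * real (card {k\<in>R - Ds. unitvec Z C1 C0 k \<omega> \<in> Aset t}) * indicator Em \<omega>"
        by (simp only:)
      have "real (DD \<omega>) * real (card {k\<in>R - Ds. unitvec Z C1 C0 k \<omega> \<in> Aset t})
        = (\<Sum>i\<in>Ds. \<Sum>j\<in>R - Ds. if unitvec Z C1 C0 i \<omega> \<in> Aset t \<and> unitvec Z C1 C0 j \<omega> \<in> Aset t then 1 else 0)"
        unfolding DD_def by (rule card_mult_sum) (use RR in auto)
      then have "real (DD \<omega>) * (real (NN \<omega>) - real (DD \<omega>)) * indicator Em \<omega>
        = (\<Sum>i\<in>Ds. \<Sum>j\<in>R - Ds. if unitvec Z C1 C0 i \<omega> \<in> Aset t \<and> unitvec Z C1 C0 j \<omega> \<in> Aset t then 1 else 0) * indicator Em \<omega>"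
        unfolding s1 by (simp only:)
      also have "\<dots> = (\<Sum>i\<in>Ds. \<Sum>j\<in>R - Ds. indicator (E i j) \<omega>)"
      proof -
        have ind: "indicator (E i j) \<omega> = (if unitvec Z C1 C0 i \<omega> \<in> Aset t \<and> unitvec Z C1 C0 j \<omega> \<in> Aset t then 1 else 0) * (indicator Em \<omega> :: real)" for i j
          by (cases "NN \<omega> = r + 2") (simp_all add: E_def Em_def m indicator_def w)
        show ?thesis by (simp only: sum_distrib_right ind)
      qed
      finally show ?thesis .
    qed
    have int1: "(\<integral>\<omega>. real (DD \<omega>) * (real (NN \<omega>) - real (DD \<omega>)) * indicator Em \<omega> \<partial>M) = real (card Ds) * real (K - card Ds) * (q * q * Q)"
    proof -
      have "(\<integral>\<omega>. real (DD \<omega>) * (real (NN \<omega>) - real (DD \<omega>)) * indicator Em \<omega> \<partial>M) = (\<integral>\<omega>. (\<Sum>i\<in>Ds. \<Sum>j\<in>R - Ds. indicator (E i j) \<omega>) \<partial>M)"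
        by (rule Bochner_Integration.integral_cong[OF refl]) (rule pw1)
      also have "\<dots> = (\<Sum>i\<in>Ds. \<Sum>j\<in>R - Ds. measure M (E i j))"
        by (rule A.int_sum_ind) (use RR Eprop in auto)
      also have "\<dots> = (\<Sum>i\<in>Ds. \<Sum>j\<in>R - Ds. q * q * Q)"
        using Eprop by (intro sum.cong refl) auto
      also have "\<dots> = real (card Ds) * real (K - card Ds) * (q * q * Q)"
        using RR by (simp add: card_Diff_subset K_def)
      finally show ?thesis .
    qed
    define E2 where "E2 i j = {\<omega>\<in>space M. unitvec Z C1 C0 i \<omega> \<in> Aset t \<inter> {x. fst x} \<and> unitvec Z C1 C0 j \<omega> \<in> Aset t \<inter> {x. \<not> fst x} \<and> NN \<omega> = r + 2}" for i j
    have sZA: "Aset t \<inter> {x. fst x} \<in> sets unitspace" unfolding ZA_eq by (rule sets_box1)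
    have snZA: "Aset t \<inter> {x. \<not> fst x} \<in> sets unitspace" unfolding nZA_eq by (rule sets_box0)
    have Eprop2: "E2 i j \<in> sets M \<and> measure M (E2 i j) = (p1 * A.G1) * ((1 - p1) * A.G0) * Q" if "i \<in> R" "j \<in> R - {i}" for i j
    proof -
      have "i \<in> R" "j \<in> R" "i \<noteq> j" using that by auto
      with cardE[OF this sZA Int_lower1 snZA Int_lower1] A.pZA[OF inR[OF \<open>i \<in> R\<close>]] A.pnZA[OF inR[OF \<open>j \<in> R\<close>]]
      show ?thesis by (simp add: E2_def)
    qed
    have pw2: "real (N1 \<omega>) * (real (NN \<omega>) - real (N1 \<omega>)) * indicator Em \<omega> = (\<Sum>i\<in>R. \<Sum>j\<in>R - {i}. indicator (E2 i j) \<omega>)"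
      if w: "\<omega> \<in> space M" for \<omega>
    proof -
      have un: "{k\<in>R. unitvec Z C1 C0 k \<omega> \<in> Aset t} = {k\<in>R. unitvec Z C1 C0 k \<omega> \<in> Aset t \<inter> {x. fst x}} \<union> {k\<in>R. unitvec Z C1 C0 k \<omega> \<in> Aset t \<inter> {x. \<not> fst x}}"
        by auto
      have "NN \<omega> = N1 \<omega> + card {k\<in>R. unitvec Z C1 C0 k \<omega> \<in> Aset t \<inter> {x. \<not> fst x}}"
        unfolding NN_def N1_def un by (rule card_Un_disjoint) (use RR in auto)
      then have "real (NN \<omega>) - real (N1 \<omega>) = real (card {k\<in>R. unitvec Z C1 C0 k \<omega> \<in> Aset t \<inter> {x. \<not> fst x}})" by simp
      then have s1: "real (N1 \<omega>) * (real (NN \<omega>) - real (N1 \<omega>)) * indicator Em \<omega>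
        = real (N1 \<omega>) * real (card {k\<in>R. unitvec Z C1 C0 k \<omega> \<in> Aset t \<inter> {x. \<not> fst x}}) * indicator Em \<omega>"
        by (simp only:)
      define f where "f i j = (if unitvec Z C1 C0 i \<omega> \<in> Aset t \<inter> {x. fst x} \<and> unitvec Z C1 C0 j \<omega> \<in> Aset t \<inter> {x. \<not> fst x} then 1 else 0 :: real)" for i j
      have "real (N1 \<omega>) * real (card {k\<in>R. unitvec Z C1 C0 k \<omega> \<in> Aset t \<inter> {x. \<not> fst x}})
        = (\<Sum>i\<in>R. \<Sum>j\<in>R. f i j)"
        unfolding N1_def f_def by (rule card_mult_sum) (use RR in auto)
      also have "\<dots> = (\<Sum>i\<in>R. \<Sum>j\<in>R - {i}. f i j)"
      proof (rule sum.cong[OF refl])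
        fix i assume i: "i \<in> R"
        have "(\<Sum>j\<in>R. f i j) = f i i + (\<Sum>j\<in>R - {i}. f i j)" by (rule sum.remove) (use RR i in auto)
        moreover have "f i i = 0" by (simp add: f_def)
        ultimately show "(\<Sum>j\<in>R. f i j) = (\<Sum>j\<in>R - {i}. f i j)" by simp
      qed
      finally have "real (N1 \<omega>) * (real (NN \<omega>) - real (N1 \<omega>)) * indicator Em \<omega> = (\<Sum>i\<in>R. \<Sum>j\<in>R - {i}. f i j) * indicator Em \<omega>"
        unfolding s1 by (simp only:)
      also have "\<dots> = (\<Sum>i\<in>R. \<Sum>j\<in>R - {i}. indicator (E2 i j) \<omega>)"
      proof -
        have ind: "indicator (E2 i j) \<omega> = f i j * (indicator Em \<omega> :: real)" for i j
          by (cases "NN \<omega> = r + 2") (simp_all add: E2_def Em_def m indicator_def w f_def)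
        show ?thesis by (simp only: sum_distrib_right ind)
      qed
      finally show ?thesis .
    qed
    have int2: "(\<integral>\<omega>. real (N1 \<omega>) * (real (NN \<omega>) - real (N1 \<omega>)) * indicator Em \<omega> \<partial>M) = real K * (real K - 1) * ((p1 * A.G1) * ((1 - p1) * A.G0) * Q)"
    proof -
      have "(\<integral>\<omega>. real (N1 \<omega>) * (real (NN \<omega>) - real (N1 \<omega>)) * indicator Em \<omega> \<partial>M) = (\<integral>\<omega>. (\<Sum>i\<in>R. \<Sum>j\<in>R - {i}. indicator (E2 i j) \<omega>) \<partial>M)"
        by (rule Bochner_Integration.integral_cong[OF refl]) (rule pw2)
      also have "\<dots> = (\<Sum>i\<in>R. \<Sum>j\<in>R - {i}. measure M (E2 i j))"
        by (rule A.int_sum_ind) (use RR Eprop2 in auto)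
      also have "\<dots> = (\<Sum>i\<in>R. \<Sum>j\<in>R - {i}. (p1 * A.G1) * ((1 - p1) * A.G0) * Q)"
        using Eprop2 by (intro sum.cong refl) auto
      also have "\<dots> = (\<Sum>i\<in>R. real (K - 1) * ((p1 * A.G1) * ((1 - p1) * A.G0) * Q))"
        using RR by (intro sum.cong refl) (simp add: K_def)
      also have "\<dots> = real K * (real K - 1) * ((p1 * A.G1) * ((1 - p1) * A.G0) * Q)"
        using K2 by (simp add: K_def of_nat_diff)
      finally show ?thesis .
    qed
    have dle: "card Ds \<le> K" unfolding K_def using RR by (simp add: card_mono)
    have fin1: "disc_cond_exp M (\<lambda>\<omega>. real (DD \<omega>) * (real (NN \<omega>) - real (DD \<omega>))) NN m
       = real m * (real m - 1) * h_at n T0 t * (1 - h_at n T0 t) * real (n_at n T0 t) / (real (n_at n T0 t) - 1)"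
      unfolding disc int1 Pm Q h_at_def nk dk K_def[symmetric] of_nat_diff[OF dle]
      by (rule alg1) (use ch K2 Cm0 qw0 m in auto)
    have fin2: "disc_cond_exp M (\<lambda>\<omega>. real (N1 \<omega>) * (real (NN \<omega>) - real (N1 \<omega>))) NN m
       = real m * (real m - 1) * phi_at M p1 C1 C0 t * (1 - phi_at M p1 C1 C0 t)"
      unfolding disc int2 Pm Q phi q_def[symmetric]
      by (rule alg2) (use ch Cm0 qw0 m in \<open>auto simp: q_def A.q_def\<close>)
    show ?thesis unfolding Deq N1eq Neq using fin1 fin2 by blast
  qed
qed

end
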